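(* For all $n\in\mathbb N$, \[\big((d_{T^{(n)}}(i),h_{T^{(n)}}(i)),\ i\in[n]\big)\stackrel{\mathcal L}{=}\big((d_{T_n}(\sigma(i)),h_{T_n}(\sigma(i))),\ i\in[n]\big),\] where $\sigma$ is a uniformly random permutation of $[n]$ independent of $T_n$. Consequently, jointly over all $i\in\mathbb Z$, $j\in\mathbb N$, the counts $|\{v\in[n]:d_{T_n}(v)=i,h_{T_n}(v)=j\}|$ and $|\{v\in[n]:d_{T^{(n)}}(v)=i,h_{T^{(n)}}(v)=j\}|$ have the same joint distribution.
   Context: Trees are rooted, edges directed towards the root; $d_t(v)$ is the number of children of $v$ in $t$ and $h_t(v)$ its distance to the root. $T_n$ is a random recursive tree: $T_1$ is a single root $1$, and $T_{m+1}$ is obtained from $T_m$ by attaching vertex $m+1$ to a uniformly random vertex of $[m]$, independently. Kingman's $n$-coalescent $(F_n,\dots,F_1)$ is the random sequence of forests on $[n]$ where $F_n$ has no edges and, for $2\le i\le n$, listing the trees of $F_i$ as $T^{(i)}_1,\dots,T^{(i)}_i$ in increasing order of smallest label, one chooses $\{a_i,b_i\}$ uniformly among 2-subsets of $[i]$ and an independent fair bit $\xi_i$ (independent over $i$), and obtains $F_{i-1}$ by adding an edge between the roots of $T^{(i)}_{a_i},T^{(i)}_{b_i}$ directed towards the root of $T^{(i)}_{\min(a_i,b_i)}$ if $\xi_i=1$ and towards the other root otherwise (the head becomes the root of the merged tree). $T^{(n)}$ is the unique tree of $F_1$, with its original labels in $[n]$. *)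

theory Defs
  imports "HOL-Probability.Probability"
begin

text \<open>Trees and forests on the vertex set [n] = {1..n} are encoded by parent
functions t :: nat => nat: for a vertex v, t v is the head of the edge leaving v
(its parent), and t v = 0 iff v is a root.  Values outside [n] are irrelevant.\<close>

definition deg :: "nat \<Rightarrow> (nat \<Rightarrow> nat) \<Rightarrow> nat \<Rightarrow> nat" where
  "deg n t v = card {u \<in> {1..n}. t u = v}"

definition hgt :: "(nat \<Rightarrow> nat) \<Rightarrow> nat \<Rightarrow> nat" where
  "hgt t v = (LEAST k. t ((t ^^ k) v) = 0)"

definition rootof :: "(nat \<Rightarrow> nat) \<Rightarrow> nat \<Rightarrow> nat" where
  "rootof t v = (t ^^ hgt t v) v"

definition roots :: "nat \<Rightarrow> (nat \<Rightarrow> nat) \<Rightarrow> nat set" where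
  "roots n t = {v \<in> {1..n}. t v = 0}"

definition minlab :: "nat \<Rightarrow> (nat \<Rightarrow> nat) \<Rightarrow> nat \<Rightarrow> nat" where
  "minlab n t r = Min {v \<in> {1..n}. rootof t v = r}"

definition ord_roots :: "nat \<Rightarrow> (nat \<Rightarrow> nat) \<Rightarrow> nat list" where
  "ord_roots n t = sort_key (minlab n t) (sorted_list_of_set (roots n t))"

fun rrt :: "nat \<Rightarrow> (nat \<Rightarrow> nat) pmf" where
  "rrt 0 = return_pmf (\<lambda>_. 0)"
| "rrt (Suc 0) = return_pmf (\<lambda>_. 0)"
| "rrt (Suc (Suc m)) =
     bind_pmf (rrt (Suc m)) (\<lambda>t.
     bind_pmf (pmf_of_set {1..Suc m}) (\<lambda>p.
     return_pmf (t(Suc (Suc m) := p))))"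

text \<open>One step of Kingman's coalescent: from F_i to F_(i-1).  The trees of F_i are
T_1..T_i (ordered by smallest label); {a,b} is uniform among 2-subsets of [i],
xi a fair bit; the edge joins the roots of T_a, T_b and is directed towards the
root of T_min(a,b) if xi = 1 (True), otherwise towards the other root.\<close>
definition coal_step :: "nat \<Rightarrow> nat \<Rightarrow> (nat \<Rightarrow> nat) \<Rightarrow> (nat \<Rightarrow> nat) pmf" where
  "coal_step n i t =
     bind_pmf (pmf_of_set {S. S \<subseteq> {1..i} \<and> card S = 2}) (\<lambda>S.
     bind_pmf (bernoulli_pmf (1/2)) (\<lambda>\<xi>.
       let rs = ord_roots n t;
           ra = rs ! (Min S - 1);
           rb = rs ! (Max S - 1)
       in return_pmf (if \<xi> then t(rb := ra) else t(ra := rb))))"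

text \<open>coal n k is the forest F_(n-k) (after k merge steps), starting from F_n with no edges.\<close>
fun coal :: "nat \<Rightarrow> nat \<Rightarrow> (nat \<Rightarrow> nat) pmf" where
  "coal n 0 = return_pmf (\<lambda>_. 0)"
| "coal n (Suc k) = bind_pmf (coal n k) (coal_step n (n - k))"

definition kingman_tree :: "nat \<Rightarrow> (nat \<Rightarrow> nat) pmf" where
  "kingman_tree n = coal n (n - 1)"

definition dh_vec :: "nat \<Rightarrow> (nat \<Rightarrow> nat) \<Rightarrow> (nat \<Rightarrow> nat) \<Rightarrow> (nat \<times> nat) list" where
  "dh_vec n t \<sigma> = map (\<lambda>i. (deg n t (\<sigma> i), hgt t (\<sigma> i))) [1..<Suc n]"

definition dh_counts :: "nat \<Rightarrow> (nat \<Rightarrow> nat) \<Rightarrow> int \<Rightarrow> nat \<Rightarrow> nat" where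
  "dh_counts n t i j = card {v \<in> {1..n}. int (deg n t v) = i \<and> hgt t v = j}"

end

theory Submission imports Defs begin


lemma bind_unif_const:
  assumes A: "finite A" "A \<noteq> {}"
    and B: "\<And>x. x \<in> A \<Longrightarrow> finite (B x) \<and> card (B x) = m" and m: "m > 0"
  shows "bind_pmf (pmf_of_set A) (\<lambda>x. map_pmf (Pair x) (pmf_of_set (B x))) = pmf_of_set (Sigma A B)"
proof (rule pmf_eqI)
  fix z :: "'a \<times> 'b"
  obtain a b where z: "z = (a,b)" by fastforce
  have Bne: "x \<in> A \<Longrightarrow> B x \<noteq> {}" for x using B m by fastforce
  have fin: "finite (Sigma A B)" using A B by auto
  have cS: "card (Sigma A B) = card A * m" using A B by simp
  have Sne: "Sigma A B \<noteq> {}" using A Bne by auto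
  have pm: "pmf (map_pmf (Pair x) (pmf_of_set (B x))) (a,b) = (if x = a then pmf (pmf_of_set (B x)) b else 0)" for x
  proof (cases "x = a")
    case True then show ?thesis by (simp add: pmf_map_inj' inj_on_def)
  next
    case False then show ?thesis by (auto simp add: pmf_eq_0_set_pmf)
  qed
  have "pmf (bind_pmf (pmf_of_set A) (\<lambda>x. map_pmf (Pair x) (pmf_of_set (B x)))) (a,b)
      = (\<Sum>x\<in>A. pmf (map_pmf (Pair x) (pmf_of_set (B x))) (a,b)) / card A"
    using A by (simp add: pmf_bind integral_pmf_of_set)
  also have "\<dots> = (\<Sum>x\<in>A. if x = a then pmf (pmf_of_set (B x)) b else 0) / card A"
    by (simp add: pm)
  also have "\<dots> = (if a \<in> A then pmf (pmf_of_set (B a)) b else 0) / card A"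
    using A by (simp add: sum.delta)
  also have "\<dots> = pmf (pmf_of_set (Sigma A B)) (a,b)"
    using A B Bne fin m cS Sne by (auto simp: indicator_def)
  finally show "pmf (bind_pmf (pmf_of_set A) (\<lambda>x. map_pmf (Pair x) (pmf_of_set (B x)))) z = pmf (pmf_of_set (Sigma A B)) z"
    using z by simp
qed

lemma bind_unif_const_map:
  assumes A: "finite A" "A \<noteq> {}"
    and B: "\<And>x. x \<in> A \<Longrightarrow> finite (B x) \<and> card (B x) = m" and m: "m > 0"
    and inj: "inj_on (\<lambda>(x,y). f x y) (Sigma A B)"
  shows "bind_pmf (pmf_of_set A) (\<lambda>x. map_pmf (f x) (pmf_of_set (B x))) = pmf_of_set ((\<lambda>(x,y). f x y) ` Sigma A B)"
proof -
  have "bind_pmf (pmf_of_set A) (\<lambda>x. map_pmf (f x) (pmf_of_set (B x)))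
      = map_pmf (\<lambda>(x,y). f x y) (bind_pmf (pmf_of_set A) (\<lambda>x. map_pmf (Pair x) (pmf_of_set (B x))))"
    by (simp add: map_bind_pmf pmf.map_comp o_def)
  also have "\<dots> = map_pmf (\<lambda>(x,y). f x y) (pmf_of_set (Sigma A B))"
    using bind_unif_const[OF A B m] by simp
  also have "\<dots> = pmf_of_set ((\<lambda>(x,y). f x y) ` Sigma A B)"
  proof (rule map_pmf_of_set_inj[OF inj])
    obtain x where x: "x \<in> A" using A by auto
    then have "B x \<noteq> {}" using B m by fastforce
    then show "Sigma A B \<noteq> {}" using x by auto
    show "finite (Sigma A B)" using A B by auto
  qed
  finally show ?thesis .
qed




definition build :: "(nat \<times> nat) list \<Rightarrow> nat \<Rightarrow> nat" where
  "build ys v = (case map_of ys v of None \<Rightarrow> 0 | Some q \<Rightarrow> q)"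

lemma build_Nil[simp]: "build [] = (\<lambda>_. 0)"
  by (auto simp: build_def)

lemma build_Cons[simp]: "build ((c,q)#ys) = (build ys)(c := q)"
  by (auto simp: build_def)

fun W :: "nat \<Rightarrow> (nat \<times> nat) list set" where
  "W 0 = {[]}"
| "W (Suc 0) = {[]}"
| "W (Suc (Suc m)) = (\<lambda>(xs,q). (Suc (Suc m), q) # xs) ` (W (Suc m) \<times> {1..Suc m})"

lemma W_props: "finite (W n) \<and> W n \<noteq> {} \<and> card (W n) = fact (n - 1) \<and>
   (\<forall>xs\<in>W n. map fst xs = rev [2..<Suc n] \<and> (\<forall>(c,q)\<in>set xs. 1 \<le> q \<and> q < c))"
proof (induction n rule: W.induct)
  case (3 m)
  have inj: "inj_on (\<lambda>(xs,q). (Suc (Suc m), q) # xs) (W (Suc m) \<times> {1..Suc m})"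
    by (auto simp: inj_on_def)
  have "card (W (Suc (Suc m))) = card (W (Suc m)) * Suc m"
    using inj 3 by (simp add: card_image card_cartesian_product)
  also have "\<dots> = fact (Suc m)" using 3 by (simp add: algebra_simps)
  finally have c: "card (W (Suc (Suc m))) = fact (Suc (Suc m) - 1)" by simp
  show ?case using 3 c by (auto simp: upt_Suc_append)
qed auto

lemma rrt_W: "rrt n = map_pmf build (pmf_of_set (W n))"
proof (induction n rule: rrt.induct)
  case 1 then show ?case by (simp add: pmf_of_set_singleton map_return_pmf)
next
  case 2 then show ?case by (simp add: pmf_of_set_singleton map_return_pmf)
next
  case (3 m)
  have "rrt (Suc (Suc m)) = bind_pmf (pmf_of_set (W (Suc m))) (\<lambda>xs.
      map_pmf build (map_pmf (\<lambda>q. (Suc (Suc m), q) # xs) (pmf_of_set {1..Suc m})))"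
    by (simp add: 3 bind_map_pmf pmf.map_comp o_def map_pmf_def[symmetric])
  also have "\<dots> = map_pmf build (bind_pmf (pmf_of_set (W (Suc m))) (\<lambda>xs.
      map_pmf (\<lambda>q. (Suc (Suc m), q) # xs) (pmf_of_set {1..Suc m})))"
    by (simp add: map_bind_pmf)
  also have "bind_pmf (pmf_of_set (W (Suc m))) (\<lambda>xs.
      map_pmf (\<lambda>q. (Suc (Suc m), q) # xs) (pmf_of_set {1..Suc m})) = pmf_of_set (W (Suc (Suc m)))"
    using W_props[of "Suc m"]
    by (subst bind_unif_const_map[where m="Suc m"]) (auto simp: inj_on_def)
  finally show ?case .
qed




lemma phi_bij:
  fixes i :: nat
  shows "bij_betw (\<lambda>(S::nat set,\<xi>). if \<xi> then (Max S - 1, Min S - 1) else (Min S - 1, Max S - 1))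
     ({S. S \<subseteq> {1..i} \<and> card S = 2} \<times> UNIV) (Sigma {..<i} (\<lambda>a. {..<i} - {a}))"
proof (rule bij_betw_byWitness[where f'="\<lambda>(a,b). ({Suc a, Suc b}, b < a)"])
  have key: "S \<subseteq> {1..i} \<Longrightarrow> card S = 2 \<Longrightarrow> \<exists>x y. x < y \<and> S = {x,y} \<and> 1 \<le> x \<and> y \<le> i" for S
  proof -
    assume "S \<subseteq> {1..i}" "card S = 2"
    then obtain x y where "x \<noteq> y" "S = {x,y}" by (auto simp: card_2_iff)
    show ?thesis
    proof (cases "x < y")
      case True
      then have "x < y \<and> S = {x,y} \<and> 1 \<le> x \<and> y \<le> i" using \<open>S = {x,y}\<close> \<open>S \<subseteq> {1..i}\<close> by auto
      then show ?thesis by blast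
    next
      case False
      then have "y < x \<and> S = {y,x} \<and> 1 \<le> y \<and> x \<le> i" using \<open>x \<noteq> y\<close> \<open>S = {x,y}\<close> \<open>S \<subseteq> {1..i}\<close> by auto
      then show ?thesis by blast
    qed
  qed
  show "\<forall>a\<in>{S. S \<subseteq> {1..i} \<and> card S = 2} \<times> UNIV.
       (\<lambda>(a, b). ({Suc a, Suc b}, b < a)) ((\<lambda>(S,\<xi>). if \<xi> then (Max S - 1, Min S - 1) else (Min S - 1, Max S - 1)) a) = a"
  proof
    fix z assume "z \<in> {S. S \<subseteq> {1..i} \<and> card S = 2} \<times> (UNIV::bool set)"
    then obtain S \<xi> where z: "z = (S,\<xi>)" "S \<subseteq> {1..i}" "card S = 2" by auto
    then obtain x y where "x < y" "S = {x,y}" "1 \<le> x" "y \<le> i" using key by blast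
    then show "(\<lambda>(a, b). ({Suc a, Suc b}, b < a)) ((\<lambda>(S,\<xi>). if \<xi> then (Max S - 1, Min S - 1) else (Min S - 1, Max S - 1)) z) = z"
      using z by (cases \<xi>) (auto simp: insert_commute)
  qed
  show "\<forall>a\<in>Sigma {..<i} (\<lambda>a. {..<i} - {a}).
       (\<lambda>(S,\<xi>). if \<xi> then (Max S - 1, Min S - 1) else (Min S - 1, Max S - 1)) ((\<lambda>(a, b). ({Suc a, Suc b}, b < a)) a) = a"
    by (auto simp: max_def min_def)
  show "(\<lambda>(S,\<xi>). if \<xi> then (Max S - 1, Min S - 1) else (Min S - 1, Max S - 1)) ` ({S. S \<subseteq> {1..i} \<and> card S = 2} \<times> UNIV)
      \<subseteq> Sigma {..<i} (\<lambda>a. {..<i} - {a})"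
  proof
    fix w assume "w \<in> (\<lambda>(S,\<xi>). if \<xi> then (Max S - 1, Min S - 1) else (Min S - 1, Max S - 1)) ` ({S. S \<subseteq> {1..i} \<and> card S = 2} \<times> UNIV)"
    then obtain S \<xi> where w: "w = (\<lambda>(S,\<xi>). if \<xi> then (Max S - 1, Min S - 1) else (Min S - 1, Max S - 1)) (S,\<xi>)" "S \<subseteq> {1..i}" "card S = 2" by auto
    then obtain x y where "x < y" "S = {x,y}" "1 \<le> x" "y \<le> i" using key by blast
    then show "w \<in> Sigma {..<i} (\<lambda>a. {..<i} - {a})" using w by auto
  qed
  show "(\<lambda>(a, b). ({Suc a, Suc b}, b < a)) ` Sigma {..<i} (\<lambda>a. {..<i} - {a}) \<subseteq> {S. S \<subseteq> {1..i} \<and> card S = 2} \<times> UNIV"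
    by auto
qed

lemma nth_pair_bij:
  assumes "distinct rs"
  shows "bij_betw (\<lambda>(a,b). (rs!a, rs!b)) (Sigma {..<length rs} (\<lambda>a. {..<length rs} - {a}))
           (Sigma (set rs) (\<lambda>c. set rs - {c}))"
proof -
  have "inj_on (\<lambda>(a,b). (rs!a, rs!b)) (Sigma {..<length rs} (\<lambda>a. {..<length rs} - {a}))"
    using assms by (auto simp: inj_on_def nth_eq_iff_index_eq)
  moreover have "(\<lambda>(a,b). (rs!a, rs!b)) ` Sigma {..<length rs} (\<lambda>a. {..<length rs} - {a}) = Sigma (set rs) (\<lambda>c. set rs - {c})"
  proof
    show "(\<lambda>(a,b). (rs!a, rs!b)) ` Sigma {..<length rs} (\<lambda>a. {..<length rs} - {a}) \<subseteq> Sigma (set rs) (\<lambda>c. set rs - {c})"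
      using assms by (auto simp: nth_eq_iff_index_eq)
    show "Sigma (set rs) (\<lambda>c. set rs - {c}) \<subseteq> (\<lambda>(a,b). (rs!a, rs!b)) ` Sigma {..<length rs} (\<lambda>a. {..<length rs} - {a})"
    proof
      fix z assume "z \<in> Sigma (set rs) (\<lambda>c. set rs - {c})"
      then obtain c q where z: "z = (c,q)" "c \<in> set rs" "q \<in> set rs" "c \<noteq> q" by auto
      then obtain a b where "a < length rs" "rs!a = c" "b < length rs" "rs!b = q" by (auto simp: in_set_conv_nth)
      then show "z \<in> (\<lambda>(a,b). (rs!a, rs!b)) ` Sigma {..<length rs} (\<lambda>a. {..<length rs} - {a})"
        using z by (auto intro!: image_eqI[of _ _ "(a,b)"])
    qed
  qed
  ultimately show ?thesis by (simp add: bij_betw_def)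
qed

lemma coal_step_eq:
  assumes ci: "card (roots n t) = i" and i2: "i \<ge> 2"
  shows "coal_step n i t = map_pmf (\<lambda>(c,q). t(c:=q)) (pmf_of_set (Sigma (roots n t) (\<lambda>c. roots n t - {c})))"
proof -
  define rs where "rs = ord_roots n t"
  have fr: "finite (roots n t)" by (simp add: roots_def)
  have rs: "distinct rs" "set rs = roots n t" "length rs = i"
    using fr ci by (auto simp: rs_def ord_roots_def length_sort)
  define SS where "SS = {S::nat set. S \<subseteq> {1..i} \<and> card S = 2}"
  define \<phi> where "\<phi> = (\<lambda>(S::nat set,\<xi>). if \<xi> then (Max S - 1, Min S - 1) else (Min S - 1, Max S - 1))"
  have SSf: "finite SS" by (simp add: SS_def)
  have SSne: "SS \<noteq> {}" using i2 by (auto simp: SS_def intro!: exI[of _ "{1,2}"])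
  have "coal_step n i t = bind_pmf (pmf_of_set SS) (\<lambda>S. map_pmf (\<lambda>\<xi>. (\<lambda>(a,b). t(rs!a := rs!b)) (\<phi> (S,\<xi>))) (pmf_of_set UNIV))"
    unfolding coal_step_def bernoulli_pmf_half_conv_pmf_of_set SS_def[symmetric] rs_def[symmetric] map_pmf_def
    by (intro bind_pmf_cong refl) (auto simp: \<phi>_def Let_def)
  also have "\<dots> = map_pmf (\<lambda>z. (\<lambda>(a,b). t(rs!a := rs!b)) (\<phi> z)) (bind_pmf (pmf_of_set SS) (\<lambda>S. map_pmf (Pair S) (pmf_of_set UNIV)))"
    by (simp add: map_bind_pmf pmf.map_comp o_def)
  also have "bind_pmf (pmf_of_set SS) (\<lambda>S. map_pmf (Pair S) (pmf_of_set UNIV)) = pmf_of_set (SS \<times> (UNIV::bool set))"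
    using SSf SSne by (intro bind_unif_const[where m=2]) auto
  also have "map_pmf (\<lambda>z. (\<lambda>(a,b). t(rs!a := rs!b)) (\<phi> z)) (pmf_of_set (SS \<times> UNIV))
     = map_pmf (\<lambda>(c,q). t(c:=q)) (map_pmf (\<lambda>(a,b). (rs!a, rs!b)) (map_pmf \<phi> (pmf_of_set (SS \<times> UNIV))))"
    by (simp add: pmf.map_comp o_def case_prod_unfold)
  also have "map_pmf \<phi> (pmf_of_set (SS \<times> UNIV)) = pmf_of_set (Sigma {..<i} (\<lambda>a. {..<i} - {a}))"
    using phi_bij[of i] SSf SSne unfolding \<phi>_def SS_def by (intro map_pmf_of_set_bij_betw) auto
  also have "map_pmf (\<lambda>(a,b). (rs!a, rs!b)) \<dots> = pmf_of_set (Sigma (roots n t) (\<lambda>c. roots n t - {c}))"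
  proof -
    have "(0, 1) \<in> Sigma {..<i} (\<lambda>a. {..<i} - {a})" using i2 by auto
    then have ne: "Sigma {..<i} (\<lambda>a. {..<i} - {a}) \<noteq> {}" by blast
    have bij: "bij_betw (\<lambda>(a,b). (rs!a, rs!b)) (Sigma {..<i} (\<lambda>a. {..<i} - {a})) (Sigma (roots n t) (\<lambda>c. roots n t - {c}))"
      using nth_pair_bij[OF rs(1)] rs(2,3) by simp
    show ?thesis by (rule map_pmf_of_set_bij_betw[OF bij ne]) simp
  qed
  finally show ?thesis .
qed




definition R :: "nat \<Rightarrow> (nat \<times> nat) list \<Rightarrow> nat set" where
  "R n ys = {1..n} - fst ` set ys"

definition RP :: "nat \<Rightarrow> (nat \<times> nat) list \<Rightarrow> (nat \<times> nat) set" where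
  "RP n ys = Sigma (R n ys) (\<lambda>c. R n ys - {c})"

lemma build_Cons': "build (p#ys) = (build ys)(fst p := snd p)"
  by (cases p) simp

fun V :: "nat \<Rightarrow> nat \<Rightarrow> (nat \<times> nat) list set" where
  "V n 0 = {[]}"
| "V n (Suc k) = (\<lambda>(ys,p). p # ys) ` Sigma (V n k) (RP n)"

fun valid :: "nat \<Rightarrow> (nat \<times> nat) list \<Rightarrow> bool" where
  "valid n [] = True"
| "valid n ((c,q)#ys) = (valid n ys \<and> c \<in> R n ys \<and> q \<in> R n ys \<and> c \<noteq> q)"

lemma V_eq: "V n k = {ys. valid n ys \<and> length ys = k}"
proof (induction k)
  case 0 then show ?case by auto
next
  case (Suc k)
  show ?case
  proof
    show "V n (Suc k) \<subseteq> {ys. valid n ys \<and> length ys = Suc k}"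
      using Suc by (auto simp: RP_def)
    show "{ys. valid n ys \<and> length ys = Suc k} \<subseteq> V n (Suc k)"
    proof
      fix ys assume "ys \<in> {ys. valid n ys \<and> length ys = Suc k}"
      then obtain c q zs where "ys = (c,q)#zs" "valid n zs" "length zs = k" "c \<in> R n zs" "q \<in> R n zs" "c \<noteq> q"
        by (cases ys) auto
      then show "ys \<in> V n (Suc k)" using Suc by (auto simp: RP_def intro!: image_eqI[of _ _ "(zs,(c,q))"])
    qed
  qed
qed

lemma valid_props: "valid n ys \<Longrightarrow> distinct (map fst ys) \<and> set ys \<subseteq> {1..n} \<times> {1..n}"
  by (induction ys rule: valid.induct) (auto simp: R_def)

lemma card_R: assumes "valid n ys" shows "card (R n ys) = n - length ys"
proof -
  have "card (fst ` set ys) = length ys"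
    using valid_props[OF assms] by (metis distinct_card length_map set_map)
  moreover have "fst ` set ys \<subseteq> {1..n}" using valid_props[OF assms] by auto
  ultimately show ?thesis unfolding R_def by (simp add: card_Diff_subset finite_subset)
qed

lemma build_zero: "valid n ys \<Longrightarrow> (build ys v = 0) \<longleftrightarrow> v \<notin> fst ` set ys"
  by (induction ys rule: valid.induct) (auto simp: R_def)

lemma roots_build: "valid n ys \<Longrightarrow> roots n (build ys) = R n ys"
  using build_zero by (auto simp: roots_def R_def)

lemma card_RP: "valid n ys \<Longrightarrow> card (RP n ys) = (n - length ys) * (n - length ys - 1)"
proof -
  assume v: "valid n ys"
  have f: "finite (R n ys)" by (simp add: R_def)
  have "card (RP n ys) = (\<Sum>c\<in>R n ys. card (R n ys - {c}))"
    unfolding RP_def using f by simp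
  also have "\<dots> = (\<Sum>c\<in>R n ys. card (R n ys) - 1)"
    using f by (intro sum.cong refl) simp
  finally show ?thesis using card_R[OF v] by simp
qed

lemma V_props: "Suc k \<le> n \<Longrightarrow> finite (V n k) \<and> V n k \<noteq> {} \<and>
   card (V n k) * fact (n - k) * fact (n - k - 1) = (fact n * fact (n - 1) :: nat)"
proof (induction k)
  case 0 then show ?case by simp
next
  case (Suc k)
  then have IH: "finite (V n k)" "V n k \<noteq> {}" "card (V n k) * fact (n - k) * fact (n - k - 1) = (fact n * fact (n - 1) :: nat)"
    by auto
  have inj: "inj_on (\<lambda>(ys,p). p # ys) (Sigma (V n k) (RP n))" by (auto simp: inj_on_def)
  have finRP: "finite (RP n ys)" for ys by (simp add: RP_def R_def)
  have cRP: "ys \<in> V n k \<Longrightarrow> card (RP n ys) = (n - k) * (n - k - 1)" for ys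
    using card_RP by (auto simp: V_eq)
  have pos: "(n - k) * (n - k - 1) > 0" using Suc by simp
  have cS: "card (Sigma (V n k) (RP n)) = card (V n k) * ((n - k) * (n - k - 1))"
    using IH(1) finRP cRP by simp
  have cV: "card (V n (Suc k)) = card (V n k) * ((n - k) * (n - k - 1))"
    using inj cS by (simp add: card_image)
  have ne: "V n (Suc k) \<noteq> {}"
  proof -
    have "card (V n k) > 0" using IH(1,2) by (simp add: card_gt_0_iff)
    then have "card (V n (Suc k)) \<noteq> 0" using cV pos by simp
    then show ?thesis by (metis card.empty)
  qed
  have f1: "fact (n - k) = (n - k) * (fact (n - Suc k) :: nat)"
  proof -
    have "n - k = Suc (n - Suc k)" using Suc by simp
    then show ?thesis by (simp only: fact_Suc) simp
  qed
  have f2: "fact (n - k - 1) = (n - k - 1) * (fact (n - Suc k - 1) :: nat)"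
  proof -
    have "n - k - 1 = Suc (n - Suc k - 1)" using Suc by simp
    then show ?thesis by (simp only: fact_Suc) simp
  qed
  have "card (V n (Suc k)) * fact (n - Suc k) * fact (n - Suc k - 1) = (fact n * fact (n - 1) :: nat)"
  proof -
    have "card (V n (Suc k)) * fact (n - Suc k) * fact (n - Suc k - 1)
       = card (V n k) * ((n - k) * fact (n - Suc k)) * ((n - k - 1) * fact (n - Suc k - 1))"
      unfolding cV by (simp only: mult_ac)
    also have "\<dots> = card (V n k) * fact (n - k) * fact (n - k - 1)" by (simp only: f1 f2)
    also note IH(3)
    finally show ?thesis .
  qed
  then show ?case using IH(1) finRP ne by simp
qed

lemma coal_V: "k \<le> n - 1 \<Longrightarrow> coal n k = map_pmf build (pmf_of_set (V n k))"
proof (induction k)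
  case 0 then show ?case by (simp add: pmf_of_set_singleton map_return_pmf)
next
  case (Suc k)
  have VP: "finite (V n k)" "V n k \<noteq> {}" using V_props[of k n] Suc by auto
  have kn: "Suc (Suc k) \<le> n" using Suc.prems by arith
  have "coal n (Suc k) = bind_pmf (pmf_of_set (V n k)) (\<lambda>ys. coal_step n (n - k) (build ys))"
    using Suc by (simp add: bind_map_pmf)
  also have "\<dots> = bind_pmf (pmf_of_set (V n k)) (\<lambda>ys. map_pmf build (map_pmf (\<lambda>p. p # ys) (pmf_of_set (RP n ys))))"
  proof (intro bind_pmf_cong refl)
    fix ys assume "ys \<in> set_pmf (pmf_of_set (V n k))"
    then have ys: "valid n ys" "length ys = k" using VP by (auto simp: V_eq)
    have "coal_step n (n - k) (build ys) = map_pmf (\<lambda>(c,q). (build ys)(c:=q)) (pmf_of_set (RP n ys))"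
      using ys kn by (subst coal_step_eq) (auto simp: roots_build card_R RP_def)
    then show "coal_step n (n - k) (build ys) = map_pmf build (map_pmf (\<lambda>p. p # ys) (pmf_of_set (RP n ys)))"
      by (simp add: pmf.map_comp o_def case_prod_unfold build_Cons')
  qed
  also have "\<dots> = map_pmf build (bind_pmf (pmf_of_set (V n k)) (\<lambda>ys. map_pmf (\<lambda>p. p # ys) (pmf_of_set (RP n ys))))"
    by (simp add: map_bind_pmf)
  also have "bind_pmf (pmf_of_set (V n k)) (\<lambda>ys. map_pmf (\<lambda>p. p # ys) (pmf_of_set (RP n ys))) = pmf_of_set (V n (Suc k))"
  proof -
    have "bind_pmf (pmf_of_set (V n k)) (\<lambda>ys. map_pmf (\<lambda>p. p # ys) (pmf_of_set (RP n ys)))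
        = pmf_of_set ((\<lambda>(ys,p). p # ys) ` Sigma (V n k) (RP n))"
    proof (rule bind_unif_const_map[where m="(n - k) * (n - k - 1)"])
      show "finite (V n k)" "V n k \<noteq> {}" using VP by auto
      show "(n - k) * (n - k - 1) > 0" using kn by simp
      show "inj_on (\<lambda>(x,y). y # x) (Sigma (V n k) (RP n))" by (auto simp: inj_on_def)
      fix ys assume "ys \<in> V n k"
      then have "valid n ys" "length ys = k" by (auto simp: V_eq)
      then show "finite (RP n ys) \<and> card (RP n ys) = (n - k) * (n - k - 1)"
        using card_RP[of n ys] by (simp add: RP_def R_def)
    qed
    then show ?thesis by simp
  qed
  finally show ?case .
qed




lemma build_in: "distinct (map fst ys) \<Longrightarrow> (v,q) \<in> set ys \<Longrightarrow> build ys v = q"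
  by (simp add: build_def map_of_is_SomeI)

lemma build_notin: "v \<notin> fst ` set ys \<Longrightarrow> build ys v = 0"
proof -
  assume "v \<notin> fst ` set ys"
  then have "map_of ys v = None" by (simp add: map_of_eq_None_iff)
  then show ?thesis by (simp add: build_def)
qed

definition hh :: "(nat \<times> nat) list \<times> (nat \<Rightarrow> nat) \<Rightarrow> (nat \<times> nat) list" where
  "hh z = rev (map (\<lambda>(c,q). (inv (snd z) c, inv (snd z) q)) (fst z))"

lemma conj_build:
  assumes tp: "\<tau> permutes {1..n}" and d: "distinct (map fst xs)"
  shows "build (rev (map (\<lambda>(c,q). (\<tau> c, \<tau> q)) xs)) (\<tau> x) = \<tau> (build xs x)"
proof -
  have inj: "inj \<tau>" using tp by (rule permutes_inj)
  have t0: "\<tau> 0 = 0" using tp by (simp add: permutes_not_in)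
  let ?ys = "rev (map (\<lambda>(c,q). (\<tau> c, \<tau> q)) xs)"
  have mf: "map fst ?ys = rev (map \<tau> (map fst xs))" by (simp add: case_prod_unfold rev_map)
  have d': "distinct (map fst ?ys)" unfolding mf using d inj by (simp add: distinct_map inj_on_def)
  show ?thesis
  proof (cases "x \<in> fst ` set xs")
    case True
    then obtain q where q: "(x,q) \<in> set xs" by auto
    then have q': "(\<tau> x, \<tau> q) \<in> set ?ys" by auto
    show ?thesis using build_in[OF d' q'] build_in[OF d q] by simp
  next
    case False
    then have nx: "\<tau> x \<notin> fst ` set ?ys" using inj by (auto simp: inj_eq) (metis fst_conv image_eqI)
    show ?thesis using build_notin[OF nx] build_notin[OF False] t0 by simp
  qed
qed

lemma deg_conj:
  assumes tp: "\<tau> permutes {1..n}" and c: "\<And>x. B (\<tau> x) = \<tau> (T x)"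
  shows "deg n B (\<tau> w) = deg n T w"
proof -
  have inj: "inj \<tau>" using tp by (rule permutes_inj)
  have "{u \<in> {1..n}. B u = \<tau> w} = \<tau> ` {x \<in> {1..n}. T x = w}"
  proof
    show "{u \<in> {1..n}. B u = \<tau> w} \<subseteq> \<tau> ` {x \<in> {1..n}. T x = w}"
    proof
      fix u assume u: "u \<in> {u \<in> {1..n}. B u = \<tau> w}"
      have "u = \<tau> (inv \<tau> u)" by (simp add: permutes_inverses(1)[OF tp])
      moreover have "inv \<tau> u \<in> {1..n}" using u permutes_in_image[OF permutes_inv[OF tp]] by auto
      moreover have "T (inv \<tau> u) = w" using u c[of "inv \<tau> u"] \<open>u = \<tau> (inv \<tau> u)\<close> inj
        by (metis (mono_tags, lifting) injD mem_Collect_eq)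
      ultimately show "u \<in> \<tau> ` {x \<in> {1..n}. T x = w}" by blast
    qed
    show "\<tau> ` {x \<in> {1..n}. T x = w} \<subseteq> {u \<in> {1..n}. B u = \<tau> w}"
      using c permutes_in_image[OF tp] by auto
  qed
  then show ?thesis unfolding deg_def using inj by (simp add: card_image inj_on_subset)
qed

lemma hgt_conj:
  assumes tp: "\<tau> permutes {1..n}" and c: "\<And>x. B (\<tau> x) = \<tau> (T x)"
  shows "hgt B (\<tau> w) = hgt T w"
proof -
  have inj: "inj \<tau>" using tp by (rule permutes_inj)
  have t0: "\<tau> 0 = 0" using tp by (simp add: permutes_not_in)
  have it: "(B ^^ k) (\<tau> w) = \<tau> ((T ^^ k) w)" for k
    by (induction k) (simp_all add: c)
  have z: "\<tau> y = 0 \<longleftrightarrow> y = 0" for y using inj t0 by (metis injD)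
  have "(\<lambda>k. B ((B ^^ k) (\<tau> w)) = 0) = (\<lambda>k. T ((T ^^ k) w) = 0)"
    by (simp add: it c z)
  then show ?thesis unfolding hgt_def by simp
qed

lemma dh_conj:
  assumes sp: "\<sigma> permutes {1..n}" and xs: "xs \<in> W n"
  shows "dh_vec n (build (hh (xs, \<sigma>))) id = dh_vec n (build xs) \<sigma>"
proof -
  let ?\<tau> = "inv \<sigma>"
  have tp: "?\<tau> permutes {1..n}" using sp by (rule permutes_inv)
  have d: "distinct (map fst xs)" using xs W_props[of n] by auto
  have c: "\<And>x. build (hh (xs, \<sigma>)) (?\<tau> x) = ?\<tau> (build xs x)"
    unfolding hh_def using conj_build[OF tp d] by simp
  show ?thesis unfolding dh_vec_def
  proof (rule map_cong[OF refl])
    fix i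
    have "i = ?\<tau> (\<sigma> i)" by (simp add: permutes_inverses(2)[OF sp])
    then show "(deg n (build (hh (xs, \<sigma>))) (id i), hgt (build (hh (xs, \<sigma>))) (id i)) =
          (deg n (build xs) (\<sigma> i), hgt (build xs) (\<sigma> i))"
      using deg_conj[where B="build (hh (xs, \<sigma>))" and T="build xs", OF tp c, of "\<sigma> i"]
        hgt_conj[where B="build (hh (xs, \<sigma>))" and T="build xs", OF tp c, of "\<sigma> i"] by simp
  qed
qed

lemma valid_snoc:
  "valid n (ys @ [(c,q)]) \<longleftrightarrow> valid n ys \<and> c \<in> {1..n} \<and> q \<in> {1..n} \<and> c \<noteq> q \<and>
     c \<notin> fst ` set ys \<and> c \<notin> snd ` set ys"
  by (induction ys rule: valid.induct) (auto simp: R_def)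

lemma valid_hh:
  assumes tp: "\<tau> permutes {1..n}"
  shows "xs \<in> W m \<Longrightarrow> m \<le> n \<Longrightarrow> valid n (rev (map (\<lambda>(c,q). (\<tau> c, \<tau> q)) xs))"
proof (induction m arbitrary: xs rule: W.induct)
  case (3 m)
  then obtain ys q where ys: "xs = (Suc (Suc m), q) # ys" "ys \<in> W (Suc m)" "q \<in> {1..Suc m}" by auto
  have inj: "inj \<tau>" using tp by (rule permutes_inj)
  have IH: "valid n (rev (map (\<lambda>(c,q). (\<tau> c, \<tau> q)) ys))" using 3 ys by simp
  have P: "\<forall>(c,q)\<in>set ys. 1 \<le> q \<and> q < c \<and> c \<le> Suc m"
  proof -
    have "map fst ys = rev [2..<Suc (Suc m)]" "\<forall>(c,q)\<in>set ys. 1 \<le> q \<and> q < c"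
      using W_props[of "Suc m"] ys(2) by auto
    then show ?thesis
    proof (intro ballI, clarify)
      fix c q assume mf: "map fst ys = rev [2..<Suc (Suc m)]" and pq: "\<forall>(c,q)\<in>set ys. 1 \<le> q \<and> q < c"
        and cq: "(c,q) \<in> set ys"
      have "c \<in> set (map fst ys)" using cq by force
      then have "c \<le> Suc m" using mf by (simp del: upt_Suc)
      then show "1 \<le> q \<and> q < c \<and> c \<le> Suc m" using pq cq by auto
    qed
  qed
  have inr: "\<tau> x \<in> {1..n}" if "x \<in> {1..n}" for x using permutes_in_image[OF tp] that by simp
  let ?f = "\<lambda>(c,q). (\<tau> c, \<tau> q)"
  have e: "rev (map ?f xs) = rev (map ?f ys) @ [(\<tau> (Suc (Suc m)), \<tau> q)]" using ys(1) by simp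
  have a1: "\<tau> (Suc (Suc m)) \<in> {1..n}" using inr "3.prems"(2) by simp
  have a2: "\<tau> q \<in> {1..n}" using inr "3.prems"(2) ys(3) by simp
  have a3: "\<tau> (Suc (Suc m)) \<noteq> \<tau> q" using ys(3) inj by (auto simp: inj_eq)
  have a4: "\<tau> (Suc (Suc m)) \<notin> fst ` set (rev (map ?f ys))"
  proof
    assume "\<tau> (Suc (Suc m)) \<in> fst ` set (rev (map ?f ys))"
    then obtain c q' where "(c,q') \<in> set ys" "\<tau> c = \<tau> (Suc (Suc m))" by auto
    then show False using P inj by (auto simp: inj_eq)
  qed
  have a5: "\<tau> (Suc (Suc m)) \<notin> snd ` set (rev (map ?f ys))"
  proof
    assume "\<tau> (Suc (Suc m)) \<in> snd ` set (rev (map ?f ys))"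
    then obtain c q' where "(c,q') \<in> set ys" "\<tau> q' = \<tau> (Suc (Suc m))" by auto
    then show False using P inj by (auto simp: inj_eq)
  qed
  show ?case unfolding e valid_snoc using IH a1 a2 a3 a4 a5 by blast
qed auto




lemma hh_inj: "inj_on hh (W n \<times> {\<sigma>. \<sigma> permutes {1..n}})"
proof (rule inj_onI, clarify)
  fix xs \<sigma> xs' \<sigma>'
  assume xs: "xs \<in> W n" and sp: "\<sigma> permutes {1..n}" and xs': "xs' \<in> W n" and sp': "\<sigma>' permutes {1..n}"
    and eq: "hh (xs, \<sigma>) = hh (xs', \<sigma>')"
  define \<tau> where "\<tau> = inv \<sigma>"
  define \<tau>' where "\<tau>' = inv \<sigma>'"
  have tp: "\<tau> permutes {1..n}" unfolding \<tau>_def using sp by (rule permutes_inv)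
  have tp': "\<tau>' permutes {1..n}" unfolding \<tau>'_def using sp' by (rule permutes_inv)
  have inj: "inj \<tau>" using tp by (rule permutes_inj)
  have m: "map (\<lambda>(c,q). (\<tau> c, \<tau> q)) xs = map (\<lambda>(c,q). (\<tau>' c, \<tau>' q)) xs'"
    using eq unfolding hh_def \<tau>_def \<tau>'_def by simp
  have mf1: "map fst xs = rev [2..<Suc n]" using xs W_props[of n] by auto
  have mf2: "map fst xs' = rev [2..<Suc n]" using xs' W_props[of n] by auto
  have "map \<tau> (map fst xs) = map \<tau>' (map fst xs')"
    using arg_cong[OF m, of "map fst"] by (simp add: case_prod_unfold o_def)
  then have "map \<tau> (rev [2..<Suc n]) = map \<tau>' (rev [2..<Suc n])" using mf1 mf2 by simp
  then have eq2: "\<forall>j\<in>{2..n}. \<tau> j = \<tau>' j"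
    by (simp add: map_eq_conv del: upt_Suc)
  have tt: "\<tau> = \<tau>'"
  proof
    fix x
    show "\<tau> x = \<tau>' x"
    proof (cases "x \<in> {2..n}")
      case True then show ?thesis using eq2 by auto
    next
      case False
      show ?thesis
      proof (cases "x = 1 \<and> 1 \<le> n")
        case True
        then have x: "x \<in> {1..n}" by auto
        have "\<tau> x \<in> {1..n}" using permutes_in_image[OF tp] x by simp
        then obtain y where y: "y \<in> {1..n}" "\<tau>' y = \<tau> x"
          using permutes_surj[OF tp'] permutes_in_image[OF tp']
          by (metis permutes_inverses(1)[OF tp'] permutes_in_image[OF permutes_inv[OF tp']])
        show ?thesis
        proof (cases "y = 1")
          case True then show ?thesis using y \<open>x = 1 \<and> 1 \<le> n\<close> by simp
        next
          case False
          then have "y \<in> {2..n}" using y by auto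
          then have "\<tau> y = \<tau> x" using eq2 y by auto
          then have "y = x" using inj by (simp add: inj_eq)
          then show ?thesis using False True by simp
        qed
      next
        case False
        then have "x \<notin> {1..n}" using \<open>x \<notin> {2..n}\<close> by auto
        then show ?thesis using tp tp' by (simp add: permutes_not_in)
      qed
    qed
  qed
  have "\<sigma> = \<sigma>'"
  proof -
    have "\<sigma> = inv \<tau>" unfolding \<tau>_def using permutes_bij[OF sp] by (simp add: inv_inv_eq)
    also have "\<dots> = inv \<tau>'" by (simp add: tt)
    also have "\<dots> = \<sigma>'" unfolding \<tau>'_def using permutes_bij[OF sp'] by (simp add: inv_inv_eq)
    finally show ?thesis .
  qed
  moreover have "xs = xs'"
  proof (rule pair_list_eqI)
    show "map fst xs = map fst xs'" using mf1 mf2 by simp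
    have "map \<tau> (map snd xs) = map \<tau> (map snd xs')"
      using arg_cong[OF m, of "map snd"] tt by (simp add: case_prod_unfold o_def)
    then show "map snd xs = map snd xs'" using inj by (metis inj_map_eq_map)
  qed
  ultimately show "xs = xs' \<and> \<sigma> = \<sigma>'" by simp
qed

lemma hh_bij:
  assumes n: "n \<ge> 1"
  shows "bij_betw hh (W n \<times> {\<sigma>. \<sigma> permutes {1..n}}) (V n (n - 1))"
proof -
  let ?D = "W n \<times> {\<sigma>. \<sigma> permutes {1..n}}"
  have finD: "finite ?D" using W_props[of n] finite_permutations[of "{1..n}"] by simp
  have sub: "hh ` ?D \<subseteq> V n (n - 1)"
  proof clarify
    fix xs \<sigma> assume xs: "xs \<in> W n" and sp: "\<sigma> permutes {1..n}"
    have "valid n (hh (xs, \<sigma>))"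
      unfolding hh_def using valid_hh[OF permutes_inv[OF sp] xs] by simp
    moreover have "length xs = n - 1"
    proof -
      have "map fst xs = rev [2..<Suc n]" using xs W_props[of n] by auto
      then have "length (map fst xs) = n - 1" by (simp del: upt_Suc)
      then show ?thesis by simp
    qed
    ultimately show "hh (xs, \<sigma>) \<in> V n (n - 1)" by (simp add: V_eq hh_def)
  qed
  have cD: "card ?D = fact (n - 1) * fact n"
    using W_props[of n] card_permutations[of "{1..n}" n] by (simp add: card_cartesian_product)
  have VP: "finite (V n (n - 1))" "card (V n (n - 1)) * fact (n - (n - 1)) * fact (n - (n - 1) - 1) = (fact n * fact (n - 1) :: nat)"
    using V_props[of "n - 1" n] n by auto
  have cV: "card (V n (n - 1)) = fact n * fact (n - 1)"
    using VP(2) n by simp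
  have "card (hh ` ?D) = card (V n (n - 1))"
    using card_image[OF hh_inj[of n]] cD cV by simp
  then have "hh ` ?D = V n (n - 1)" using card_subset_eq[OF VP(1) sub] by simp
  then show ?thesis using hh_inj[of n] by (simp add: bij_betw_def)
qed

definition FF :: "(nat \<times> nat) list \<Rightarrow> int \<Rightarrow> nat \<Rightarrow> nat" where
  "FF v i j = length (filter (\<lambda>(a,b). int a = i \<and> b = j) v)"

lemma FF_dh:
  assumes sp: "\<sigma> permutes {1..n}"
  shows "FF (dh_vec n t \<sigma>) = dh_counts n t"
proof (intro ext)
  fix i j
  define Q where "Q = (\<lambda>v. int (deg n t v) = i \<and> hgt t v = j)"
  have "FF (dh_vec n t \<sigma>) i j = length (filter (\<lambda>x. Q (\<sigma> x)) [1..<Suc n])"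
    by (simp add: FF_def dh_vec_def Q_def o_def case_prod_unfold)
  also have "\<dots> = card {x \<in> {1..n}. Q (\<sigma> x)}"
    by (subst distinct_length_filter) (auto intro: arg_cong[where f=card])
  also have "\<dots> = card (\<sigma> ` {x \<in> {1..n}. Q (\<sigma> x)})"
    using permutes_inj[OF sp] by (simp add: card_image inj_on_subset)
  also have "\<sigma> ` {x \<in> {1..n}. Q (\<sigma> x)} = {v \<in> {1..n}. Q v}"
  proof
    show "\<sigma> ` {x \<in> {1..n}. Q (\<sigma> x)} \<subseteq> {v \<in> {1..n}. Q v}"
      using permutes_in_image[OF sp] by auto
    show "{v \<in> {1..n}. Q v} \<subseteq> \<sigma> ` {x \<in> {1..n}. Q (\<sigma> x)}"
    proof
      fix v assume v: "v \<in> {v \<in> {1..n}. Q v}"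
      have "v = \<sigma> (inv \<sigma> v)" by (simp add: permutes_inverses(1)[OF sp])
      moreover have "inv \<sigma> v \<in> {1..n}" using v permutes_in_image[OF permutes_inv[OF sp]] by auto
      ultimately show "v \<in> \<sigma> ` {x \<in> {1..n}. Q (\<sigma> x)}" using v by (metis (mono_tags, lifting) image_eqI mem_Collect_eq)
    qed
  qed
  finally show "FF (dh_vec n t \<sigma>) i j = dh_counts n t i j" by (simp add: dh_counts_def Q_def)
qed

theorem corollary2p3:
  fixes n :: nat
  assumes "n \<ge> 1"
  shows "map_pmf (\<lambda>t. dh_vec n t id) (kingman_tree n) =
           bind_pmf (rrt n) (\<lambda>t.
           bind_pmf (pmf_of_set {\<sigma>. \<sigma> permutes {1..n}}) (\<lambda>\<sigma>.
           return_pmf (dh_vec n t \<sigma>)))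
       \<and> map_pmf (dh_counts n) (rrt n) = map_pmf (dh_counts n) (kingman_tree n)"
proof -
  let ?P = "{\<sigma>. \<sigma> permutes {1..n}}"
  let ?D = "W n \<times> ?P"
  have "id \<in> ?P" by (simp add: permutes_id)
  then have finP: "finite ?P" "?P \<noteq> {}" using finite_permutations[of "{1..n}"] by blast+
  have cP: "card ?P = fact n" using card_permutations[of "{1..n}" n] by simp
  have finD: "finite ?D" "?D \<noteq> {}" using W_props[of n] finP by auto
  have K: "kingman_tree n = map_pmf build (pmf_of_set (V n (n - 1)))"
    unfolding kingman_tree_def by (rule coal_V) simp
  have U: "pmf_of_set (V n (n - 1)) = map_pmf hh (pmf_of_set ?D)"
    using map_pmf_of_set_bij_betw[OF hh_bij[OF assms] finD(2) finD(1)] by simp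
  have L: "map_pmf (\<lambda>t. dh_vec n t id) (kingman_tree n) = map_pmf (\<lambda>(xs,\<sigma>). dh_vec n (build xs) \<sigma>) (pmf_of_set ?D)"
    unfolding K U pmf.map_comp o_def
  proof (rule map_pmf_cong[OF refl])
    fix z assume "z \<in> set_pmf (pmf_of_set ?D)"
    then obtain xs \<sigma> where z: "z = (xs,\<sigma>)" "xs \<in> W n" "\<sigma> permutes {1..n}" using finD by auto
    then show "dh_vec n (build (hh z)) id = (\<lambda>(xs,\<sigma>). dh_vec n (build xs) \<sigma>) z"
      using dh_conj[OF z(3) z(2)] by simp
  qed
  have RHS: "bind_pmf (rrt n) (\<lambda>t. bind_pmf (pmf_of_set ?P) (\<lambda>\<sigma>. return_pmf (dh_vec n t \<sigma>)))
      = map_pmf (\<lambda>(xs,\<sigma>). dh_vec n (build xs) \<sigma>) (pmf_of_set ?D)"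
  proof -
    have "bind_pmf (rrt n) (\<lambda>t. bind_pmf (pmf_of_set ?P) (\<lambda>\<sigma>. return_pmf (dh_vec n t \<sigma>)))
        = map_pmf (\<lambda>(xs,\<sigma>). dh_vec n (build xs) \<sigma>) (bind_pmf (pmf_of_set (W n)) (\<lambda>xs. map_pmf (Pair xs) (pmf_of_set ?P)))"
      by (simp add: rrt_W bind_map_pmf map_bind_pmf pmf.map_comp o_def map_pmf_def[symmetric])
    also have "bind_pmf (pmf_of_set (W n)) (\<lambda>xs. map_pmf (Pair xs) (pmf_of_set ?P)) = pmf_of_set ?D"
      using W_props[of n] finP cP by (intro bind_unif_const[where m="fact n"]) auto
    finally show ?thesis .
  qed
  have part1: "map_pmf (\<lambda>t. dh_vec n t id) (kingman_tree n) =
           bind_pmf (rrt n) (\<lambda>t. bind_pmf (pmf_of_set ?P) (\<lambda>\<sigma>. return_pmf (dh_vec n t \<sigma>)))"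
    using L RHS by simp
  have "map_pmf (dh_counts n) (kingman_tree n) = map_pmf FF (map_pmf (\<lambda>t. dh_vec n t id) (kingman_tree n))"
    by (simp add: pmf.map_comp o_def FF_dh[OF permutes_id])
  also have "\<dots> = bind_pmf (rrt n) (\<lambda>t. bind_pmf (pmf_of_set ?P) (\<lambda>\<sigma>. return_pmf (FF (dh_vec n t \<sigma>))))"
    unfolding part1 by (simp add: map_bind_pmf map_return_pmf)
  also have "\<dots> = bind_pmf (rrt n) (\<lambda>t. bind_pmf (pmf_of_set ?P) (\<lambda>\<sigma>. return_pmf (dh_counts n t)))"
    using finP by (intro bind_pmf_cong refl) (auto simp: FF_dh)
  also have "\<dots> = map_pmf (dh_counts n) (rrt n)" by (simp add: map_pmf_def)
  finally show ?thesis using part1 by simp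
qed


end
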